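(* Let $(M,\omega)$ be a compact Kähler manifold of complex dimension $n$, $\chi$ a closed real $(1,1)$-form, and $\theta_0\in(0,\pi)$ the argument of $\int_M(\chi+\sqrt{-1}\omega)^n$. Let $\underline u$ be a smooth real function on $M$ with $$A_0:=\max_M\max_{1\le j\le n}\sum_{i\neq j}\operatorname{arccot}\lambda_i(\chi_{\underline u})<\theta_0\quad\text{and}\quad B_0:=\max_M\theta(\chi_{\underline u})<\pi.$$ Then the function $\underline u(x,t):=\underline u(x)$ on $M\times[0,\infty)$ is a subsolution of the parabolic equation $u_t=\cot\theta(\chi_u)-\cot\theta_0$ in the following sense: there exist constants $\delta>0$ and $K>0$ such that for every $(x,t)\in M\times[0,\infty)$ the set $$S_\delta(x,t):=\{(\mu,\tau)\in\mathbb R^n\times\mathbb R:\ \cot\theta\bigl(\lambda(\chi_{\underline u})(x)+\mu\bigr)-\underline u_t(x,t)+\tau=\cot\theta_0,\ \mu_i>-\delta\ \forall i,\ \tau>-\delta\}$$ is contained in the ball of radius $K$ centered at the origin of $\mathbb R^{n+1}$.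
   Context: $\chi_u:=\chi+\sqrt{-1}\partial\bar\partial u$; $\lambda(\chi_u)=(\lambda_1,\dots,\lambda_n)$ are the eigenvalues of $\chi_u$ with respect to $\omega$; $\operatorname{arccot}$ takes values in $(0,\pi)$; for $\lambda\in\mathbb R^n$, $\theta(\lambda):=\sum_i\operatorname{arccot}\lambda_i$ and $\theta(\chi_u):=\theta(\lambda(\chi_u))$. Here $\underline u_t\equiv 0$ since $\underline u$ is time-independent. *)

theory Defs
  imports "HOL-Analysis.Analysis"
begin

definition arccot :: "real \<Rightarrow> real" where
  "arccot x = pi / 2 - arctan x"

definition theta :: "real ^ 'n \<Rightarrow> real" where
  "theta lam = (\<Sum>i\<in>UNIV. arccot (lam $ i))"

text \<open>The subsolution set S_delta(x,t); lam = lambda(chi_ubar)(x), ut = ubar_t(x,t).\<close>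
definition S_set :: "real \<Rightarrow> real \<Rightarrow> real ^ 'n \<Rightarrow> real \<Rightarrow> ((real ^ 'n) \<times> real) set" where
  "S_set \<theta>0 \<delta> lam ut = {(\<mu>, \<tau>). cot (theta (lam + \<mu>)) - ut + \<tau> = cot \<theta>0
      \<and> (\<forall>i. \<mu> $ i > - \<delta>) \<and> \<tau> > - \<delta>}"

end

theory Submission
  imports Defs
begin


lemma arctan_lip: assumes "0 \<le> d" shows "arctan a - arctan (a - d) \<le> d"
proof (cases "d = 0")
  case True thus ?thesis by simp
next
  case False
  then have "a - d < a" using assms by simp
  from MVT2[OF this, of arctan "\<lambda>x. inverse (1 + x\<^sup>2)"]
  obtain z where "arctan a - arctan (a - d) = (a - (a - d)) * inverse (1 + z\<^sup>2)"
    using DERIV_arctan by blast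
  moreover have "inverse (1 + z\<^sup>2) \<le> 1" by (simp add: add_nonneg_pos inverse_le_1_iff)
  ultimately show ?thesis using assms by (simp add: mult_left_le)
qed

lemma arccot_pos: "0 < arccot x" and arccot_lt_pi: "arccot x < pi"
  unfolding arccot_def using arctan_bounded[of x] by auto

lemma arccot_lip: "0 \<le> d \<Longrightarrow> arccot (a - d) \<le> arccot a + d"
  unfolding arccot_def using arctan_lip[of d a] by simp

lemma arccot_anti: "a \<le> b \<Longrightarrow> arccot b \<le> arccot a"
  unfolding arccot_def using arctan_monotone' by simp

lemma cot_less: assumes "0 < x" "x < y" "y < pi" shows "cot y < cot x"
proof -
  have "tan (pi/2 - y) < tan (pi/2 - x)"
    using assms by (intro tan_monotone) auto
  thus ?thesis by (simp add: tan_cot')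
qed

lemma cot_le: assumes "0 < x" "x \<le> y" "y < pi" shows "cot y \<le> cot x"
  using cot_less[OF assms(1) _ assms(3)] assms(2) by (cases "x = y") auto


theorem lemma2p7:
  fixes M :: "'m::topological_space set"
    and lam :: "'m \<Rightarrow> real ^ 'n"
    and ubar :: "'m \<Rightarrow> real"
    and \<theta>0 :: real
  assumes "compact M" and "M \<noteq> {}"
    and "continuous_on M lam"
    and "0 < \<theta>0" and "\<theta>0 < pi"
    and "(SUP x\<in>M. Max ((\<lambda>j. \<Sum>i\<in>UNIV - {j}. arccot (lam x $ i)) ` UNIV)) < \<theta>0"
    and "(SUP x\<in>M. theta (lam x)) < pi"
  shows "\<exists>\<delta> K. \<delta> > 0 \<and> K > 0 \<and>
           (\<forall>x\<in>M. \<forall>t\<ge>(0::real).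
              S_set \<theta>0 \<delta> (lam x) (deriv (\<lambda>s. ubar x) t) \<subseteq> ball 0 K)"
proof -
  define F where "F x = Max ((\<lambda>j. \<Sum>i\<in>UNIV - {j}. arccot (lam x $ i)) ` (UNIV::'n set))" for x
  define A0 where "A0 = (SUP x\<in>M. F x)"
  define B0 where "B0 = (SUP x\<in>M. theta (lam x))"
  have A0: "A0 < \<theta>0" using assms(6) unfolding A0_def F_def .
  have B0: "B0 < pi" using assms(7) unfolding B0_def .
  define N where "N = real CARD('n)"
  have N: "N \<ge> 1" unfolding N_def by simp
  have sumle: "(\<Sum>i\<in>UNIV - {j}. arccot (v $ i)) \<le> N * pi" for v :: "real ^ 'n" and j
  proof -
    have "(\<Sum>i\<in>UNIV - {j}. arccot (v $ i)) \<le> (\<Sum>i\<in>UNIV - {j}. pi)"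
      by (intro sum_mono) (simp add: arccot_lt_pi less_imp_le)
    also have "\<dots> \<le> (\<Sum>i\<in>(UNIV::'n set). pi)" by (intro sum_mono2) auto
    finally show ?thesis by (simp add: N_def)
  qed
  have sumge: "(\<Sum>i\<in>S. arccot (v $ i)) \<ge> 0" for v :: "real ^ 'n" and S
    by (intro sum_nonneg) (simp add: arccot_pos less_imp_le)
  have Fle: "F x \<le> N * pi" for x
    unfolding F_def using sumle by (subst Max_le_iff) auto
  have Fge: "(\<Sum>i\<in>UNIV - {j}. arccot (lam x $ i)) \<le> F x" for x j
    unfolding F_def by (rule Max_ge) auto
  have thle: "theta v \<le> N * pi" for v :: "real ^ 'n"
  proof -
    have "theta v \<le> (\<Sum>i\<in>(UNIV::'n set). pi)" unfolding theta_def
      by (intro sum_mono) (simp add: arccot_lt_pi less_imp_le)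
    thus ?thesis by (simp add: N_def)
  qed
  have FA: "x \<in> M \<Longrightarrow> F x \<le> A0" for x
    unfolding A0_def by (rule cSUP_upper) (use Fle in \<open>auto intro!: bdd_aboveI2\<close>)
  have TB: "x \<in> M \<Longrightarrow> theta (lam x) \<le> B0" for x
    unfolding B0_def by (rule cSUP_upper) (use thle in \<open>auto intro!: bdd_aboveI2\<close>)
  obtain x0 where x0: "x0 \<in> M" using assms(2) by auto
  have A0ge: "A0 \<ge> 0"
    using FA[OF x0] Fge[of x0 undefined] sumge[where S="UNIV - {undefined}" and v="lam x0"] by linarith
  define g where "g = \<theta>0 - A0"
  have g: "0 < g" "g \<le> \<theta>0" using A0 A0ge by (auto simp: g_def)
  define c where "c = cot (\<theta>0 - g/3) - cot \<theta>0"
  have c: "0 < c" unfolding c_def using g assms(4,5) by (intro cot_less[THEN diff_gt_0_iff_gt[THEN iffD2]]) auto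
  define \<delta> where "\<delta> = min (c/2) (min (g / (3*N)) ((pi - B0)/(2*N)))"
  have \<delta>: "0 < \<delta>" unfolding \<delta>_def using c g B0 N by auto
  have \<delta>c: "\<delta> < c" unfolding \<delta>_def using c by auto
  have \<delta>g: "N * \<delta> \<le> g/3"
  proof -
    have "N * \<delta> \<le> N * (g / (3*N))" unfolding \<delta>_def using N by (intro mult_left_mono) auto
    also have "\<dots> = g/3" using N by simp
    finally show ?thesis .
  qed
  have \<delta>B: "B0 + N * \<delta> < pi" 
  proof -
    have "N * \<delta> \<le> N * ((pi - B0)/(2*N))" unfolding \<delta>_def using N by (intro mult_left_mono) auto
    also have "\<dots> = (pi - B0)/2" using N by simp
    finally show ?thesis using B0 by simp
  qed
  define B1 where "B1 = B0 + N * \<delta>"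
  define T where "T = max \<delta> \<bar>cot \<theta>0 - cot B1\<bar>"
  define L where "L = tan (pi/2 - B0)"
  define U where "U = max \<delta> \<bar>tan (pi/2 - g/3) - L\<bar>"
  define K where "K = N * U + T + 1"
  have B0ge: "B0 \<ge> 0" using TB[OF x0] sumge[where S=UNIV and v="lam x0"] unfolding theta_def by linarith
  have "U \<ge> 0" "T \<ge> 0" unfolding U_def T_def using \<delta> by auto
  hence "K > 0" unfolding K_def using N by (simp add: add_nonneg_pos)
  moreover have "S_set \<theta>0 \<delta> (lam x) (deriv (\<lambda>s. ubar x) t) \<subseteq> ball 0 K" if x: "x \<in> M" for x t
  proof
    fix p assume "p \<in> S_set \<theta>0 \<delta> (lam x) (deriv (\<lambda>s. ubar x) t)"
    then obtain \<mu> \<tau> where p: "p = (\<mu>, \<tau>)" and eq: "cot (theta (lam x + \<mu>)) + \<tau> = cot \<theta>0"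
      and \<mu>: "\<And>i. \<mu> $ i > - \<delta>" and \<tau>: "\<tau> > - \<delta>"
      unfolding S_set_def by auto
    define s where "s = theta (lam x + \<mu>)"
    have terms: "arccot ((lam x + \<mu>) $ i) \<le> arccot (lam x $ i) + \<delta>" for i
    proof -
      have "arccot ((lam x + \<mu>) $ i) \<le> arccot (lam x $ i - \<delta>)"
        using \<mu>[of i] by (intro arccot_anti) auto
      also have "\<dots> \<le> arccot (lam x $ i) + \<delta>" using \<delta> by (intro arccot_lip) auto
      finally show ?thesis .
    qed
    have s_pos: "0 < s" unfolding s_def theta_def
      by (intro sum_pos) (auto simp: arccot_pos)
    have "s \<le> (\<Sum>i\<in>UNIV. arccot (lam x $ i) + \<delta>)" unfolding s_def theta_def
      by (intro sum_mono terms)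
    also have "\<dots> = theta (lam x) + N * \<delta>" by (simp add: sum.distrib theta_def N_def)
    finally have sB1: "s \<le> B1" using TB[OF x] by (simp add: B1_def)
    have B1pi: "B1 < pi" using \<delta>B by (simp add: B1_def)
    have "cot B1 \<le> cot s" using s_pos sB1 B1pi by (intro cot_le)
    hence \<tau>abs: "\<bar>\<tau>\<bar> \<le> T" using eq \<tau> unfolding T_def s_def by linarith
    have "cot s < cot (\<theta>0 - g/3)" using eq \<tau> \<delta>c unfolding s_def c_def by linarith
    hence sg: "s > \<theta>0 - g/3"
    proof (rule contrapos_pp)
      assume "\<not> s > \<theta>0 - g/3"
      hence "cot (\<theta>0 - g/3) \<le> cot s" using s_pos assms(5) g by (intro cot_le) auto
      thus "\<not> cot s < cot (\<theta>0 - g/3)" by simp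
    qed
    have \<mu>abs: "\<bar>\<mu> $ j\<bar> \<le> U" for j
    proof -
      have seq: "s = arccot ((lam x + \<mu>) $ j) + (\<Sum>i\<in>UNIV - {j}. arccot ((lam x + \<mu>) $ i))"
        unfolding s_def theta_def by (subst sum.remove[of _ j]) auto
      have "(\<Sum>i\<in>UNIV - {j}. arccot ((lam x + \<mu>) $ i)) \<le> (\<Sum>i\<in>UNIV - {j}. arccot (lam x $ i) + \<delta>)"
        by (intro sum_mono terms)
      also have "\<dots> = (\<Sum>i\<in>UNIV - {j}. arccot (lam x $ i)) + real (card (UNIV - {j} :: 'n set)) * \<delta>"
        by (simp add: sum.distrib)
      also have "\<dots> \<le> A0 + N * \<delta>"
      proof -
        have "real (card (UNIV - {j} :: 'n set)) \<le> N" unfolding N_def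
          by (simp add: card_mono)
        hence "real (card (UNIV - {j} :: 'n set)) * \<delta> \<le> N * \<delta>" using \<delta> by (simp add: mult_right_mono)
        thus ?thesis using Fge[of x j] FA[OF x] by linarith
      qed
      finally have "arccot ((lam x + \<mu>) $ j) > g/3" using seq sg \<delta>g g_def by linarith
      hence "arctan (lam x $ j + \<mu> $ j) < pi/2 - g/3" unfolding arccot_def by simp
      hence "tan (arctan (lam x $ j + \<mu> $ j)) < tan (pi/2 - g/3)"
        using g assms(5) arctan_bounded by (intro tan_monotone) auto
      hence up: "lam x $ j + \<mu> $ j < tan (pi/2 - g/3)" by (simp add: tan_arctan)
      have "arccot (lam x $ j) \<le> theta (lam x)"
        unfolding theta_def using sumge[where S="UNIV - {j}" and v="lam x"]
        by (subst sum.remove[of _ j]) auto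
      hence "arccot (lam x $ j) \<le> B0" using TB[OF x] by linarith
      hence "pi/2 - B0 \<le> arctan (lam x $ j)" unfolding arccot_def by simp
      hence "tan (pi/2 - B0) \<le> tan (arctan (lam x $ j))"
        using B0 arctan_bounded[of "lam x $ j"]
        by (cases "pi/2 - B0 = arctan (lam x $ j)") (auto intro!: less_imp_le tan_monotone)
      hence "L \<le> lam x $ j" by (simp add: tan_arctan L_def)
      thus ?thesis using up \<mu>[of j] unfolding U_def by linarith
    qed
    have "norm \<mu> \<le> (\<Sum>i\<in>UNIV. \<bar>\<mu> $ i\<bar>)" by (rule norm_le_l1_cart)
    also have "\<dots> \<le> (\<Sum>i\<in>(UNIV::'n set). U)" by (intro sum_mono \<mu>abs)
    also have "\<dots> = N * U" by (simp add: N_def)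
    finally have "norm p \<le> N * U + T" using norm_Pair_le[of \<mu> \<tau>] \<tau>abs p by simp
    thus "p \<in> ball 0 K" unfolding K_def by simp
  qed
  ultimately show ?thesis using \<delta> by blast
qed

end
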